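(* Let $\alpha\in\mathbb{R}\setminus\mathbb{Q}$ and $\tilde v\in C^0(\mathbb{T},\mathbb{C})$, and let $S^{\tilde v}(x)=\begin{pmatrix}\tilde v(x)&-1\\1&0\end{pmatrix}$. Assume that $|\operatorname{Re}\tilde v(x)|\le l$ and $\epsilon\le\operatorname{Im}\tilde v(x)\le l$ for all $x\in\mathbb{T}$, where $l\ge \epsilon>0$. Then $L(\alpha,S^{\tilde v})\ge C(l)\,\epsilon$, where $C(l)>0$ is a constant depending only on $l$.
   Context: $\mathbb{T}=\mathbb{R}/\mathbb{Z}$. For a continuous $A:\mathbb{T}\to SL(2,\mathbb{C})$ the Lyapunov exponent of the quasiperiodic cocycle $(\alpha,A)$ is $L(\alpha,A)=\lim_{n\to\infty}\frac1n\int_{\mathbb T}\ln\|A(x+(n-1)\alpha)\cdots A(x)\|\,dx$. *)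

theory Defs
  imports "HOL-Analysis.Analysis"
begin

definition mat_norm :: "complex^2^2 \<Rightarrow> real" where
  "mat_norm A = onorm (\<lambda>v. A *v v)"

definition schr_mat :: "(real \<Rightarrow> complex) \<Rightarrow> real \<Rightarrow> complex^2^2" where
  "schr_mat v x = (\<chi> i j. if i = 1 then (if j = 1 then v x else -1)
                           else (if j = 1 then 1 else 0))"

text \<open>n-step cocycle A(x+(n-1)a) ... A(x); functions on T = R/Z are 1-periodic functions on R.\<close>
fun cocycle_iter :: "real \<Rightarrow> (real \<Rightarrow> complex^2^2) \<Rightarrow> nat \<Rightarrow> real \<Rightarrow> complex^2^2" where
  "cocycle_iter a A 0 x = mat 1"
| "cocycle_iter a A (Suc n) x = A (x + real n * a) ** cocycle_iter a A n x"

definition lyap_exp :: "real \<Rightarrow> (real \<Rightarrow> complex^2^2) \<Rightarrow> real" where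
  "lyap_exp a A = lim (\<lambda>n. (1 / real n) * integral {0..1} (\<lambda>x. ln (mat_norm (cocycle_iter a A n x))))"

end

theory Submission
  imports Defs
begin


lemma bl_mv: "bounded_linear (\<lambda>w. (B::complex^2^2) *v w)"
  using matrix_vector_mul_bounded_linear[of B] by simp

lemma mat_norm_mult: "mat_norm (B ** C) \<le> mat_norm B * mat_norm C"
proof -
  have "onorm ((\<lambda>w. B *v w) \<circ> (\<lambda>w. C *v w)) \<le> onorm (\<lambda>w. B *v w) * onorm (\<lambda>w. C *v w)"
    by (rule onorm_compose[OF bl_mv bl_mv])
  then show ?thesis unfolding mat_norm_def by (simp add: o_def matrix_vector_mul_assoc)
qed

lemma mat_norm_app: "norm (B *v w) \<le> mat_norm B * norm w"
  unfolding mat_norm_def using onorm[OF bl_mv] by blast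

lemma norm_vec2_le: "norm (w::complex^2) \<le> norm (w$1) + norm (w$2)"
  using L2_set_le_sum[of UNIV "\<lambda>i. norm (w$i)"] by (simp add: norm_vec_def sum_2)

lemma mat_norm_le_sum: "mat_norm B \<le> (\<Sum>i\<in>UNIV. \<Sum>j\<in>UNIV. norm (B $ i $ j))"
  unfolding mat_norm_def
proof (rule onorm_le)
  fix x :: "complex^2"
  have "norm (B *v x) \<le> (\<Sum>i\<in>UNIV. norm ((B *v x) $ i))"
    using L2_set_le_sum[of UNIV "\<lambda>i. norm ((B *v x)$i)"] by (simp add: norm_vec_def)
  also have "\<dots> \<le> (\<Sum>i\<in>UNIV. \<Sum>j\<in>UNIV. norm (B $ i $ j) * norm x)"
  proof (rule sum_mono)
    fix i
    have "norm ((B *v x) $ i) = norm (\<Sum>j\<in>UNIV. B $ i $ j * x $ j)"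
      by (simp add: matrix_vector_mult_def)
    also have "\<dots> \<le> (\<Sum>j\<in>UNIV. norm (B $ i $ j * x $ j))"
      by (rule norm_sum)
    also have "\<dots> \<le> (\<Sum>j\<in>UNIV. norm (B $ i $ j) * norm x)"
      by (rule sum_mono) (simp add: norm_mult, intro mult_left_mono Finite_Cartesian_Product.norm_nth_le norm_ge_zero)
    finally show "norm ((B *v x) $ i) \<le> (\<Sum>j\<in>UNIV. norm (B $ i $ j) * norm x)" .
  qed
  finally show "norm (B *v x) \<le> (\<Sum>i\<in>UNIV. \<Sum>j\<in>UNIV. norm (B $ i $ j)) * norm x"
    by (simp add: sum_distrib_right)
qed

lemma mat_norm_le_norm: "mat_norm B \<le> 4 * norm B"
proof -
  have "\<And>i j. norm (B $ i $ j) \<le> norm B"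
  proof -
    fix i j
    have "norm (B $ i $ j) \<le> norm (B $ i)" by (rule Finite_Cartesian_Product.norm_nth_le)
    also have "\<dots> \<le> norm B" by (rule Finite_Cartesian_Product.norm_nth_le)
    finally show "norm (B $ i $ j) \<le> norm B" .
  qed
  then have "(\<Sum>i\<in>UNIV. \<Sum>j\<in>UNIV. norm (B $ i $ j)) \<le> 4 * norm B"
    by (simp add: sum_2) (smt (verit))
  then show ?thesis using mat_norm_le_sum[of B] by linarith
qed

lemma mat_norm_lip: "mat_norm B - mat_norm C \<le> 4 * norm (B - C)"
proof -
  have "mat_norm B = onorm (\<lambda>w. (B - C) *v w + C *v w)"
    unfolding mat_norm_def by (simp add: matrix_vector_mult_diff_rdistrib)
  also have "\<dots> \<le> mat_norm (B - C) + mat_norm C"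
    unfolding mat_norm_def by (rule onorm_triangle[OF bl_mv bl_mv])
  finally show ?thesis using mat_norm_le_norm[of "B - C"] by linarith
qed

lemma mat_norm_cont: "continuous_on S mat_norm"
proof -
  have "4-lipschitz_on S mat_norm"
  proof (rule lipschitz_onI)
    fix x y assume "x \<in> S" "y \<in> S"
    show "dist (mat_norm x) (mat_norm y) \<le> 4 * dist x y"
      using mat_norm_lip[of x y] mat_norm_lip[of y x]
      by (simp add: dist_norm dist_real_def norm_minus_commute abs_le_iff)
  qed simp
  then show ?thesis by (rule lipschitz_on_continuous_on)
qed

lemma cocycle_add:
  "cocycle_iter a A (n + m) x = cocycle_iter a A m (x + real n * a) ** cocycle_iter a A n x"
proof (induction m)
  case 0 then show ?case by (simp add: matrix_mul_lid)
next
  case (Suc m)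
  have "cocycle_iter a A (n + Suc m) x = A (x + real (n+m) * a) ** cocycle_iter a A (n + m) x"
    by simp
  also have "\<dots> = A (x + real n * a + real m * a) ** (cocycle_iter a A m (x + real n * a) ** cocycle_iter a A n x)"
    using Suc by (simp add: algebra_simps)
  also have "\<dots> = cocycle_iter a A (Suc m) (x + real n * a) ** cocycle_iter a A n x"
    by (simp add: matrix_mul_assoc)
  finally show ?case .
qed

lemma cocycle_periodic:
  assumes "\<And>x. A (x + 1) = A x"
  shows "cocycle_iter a A n (x + 1) = cocycle_iter a A n x"
proof (induction n)
  case 0 then show ?case by simp
next
  case (Suc n)
  have "A (x + 1 + real n * a) = A (x + real n * a)"
    using assms[of "x + real n * a"] by (simp add: algebra_simps)
  then show ?case using Suc by simp
qed

lemma cont_matmul: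
  fixes f g :: "real \<Rightarrow> complex^2^2"
  assumes "continuous_on S f" "continuous_on S g"
  shows "continuous_on S (\<lambda>x. f x ** g x)"
  unfolding matrix_matrix_mult_def
  by (intro continuous_on_vec_lambda continuous_intros assms)

lemma cocycle_cont:
  assumes "continuous_on UNIV A"
  shows "continuous_on UNIV (cocycle_iter a A n)"
proof (induction n)
  case 0 then show ?case by simp
next
  case (Suc n)
  have "continuous_on UNIV (\<lambda>x. A (x + real n * a))"
    by (intro continuous_on_compose2[OF assms] continuous_intros) auto
  then have "continuous_on UNIV (\<lambda>x. A (x + real n * a) ** cocycle_iter a A n x)"
    using Suc by (intro cont_matmul) auto
  then show ?case by simp
qed

lemma schr_cont:
  assumes "continuous_on UNIV v"
  shows "continuous_on UNIV (schr_mat v)"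
proof -
  have "\<And>i j. continuous_on UNIV (\<lambda>x. if i = (1::2) then (if j = (1::2) then v x else -1)
                           else (if j = 1 then 1 else 0))"
  proof -
    fix i j :: 2
    show "continuous_on UNIV (\<lambda>x. if i = (1::2) then (if j = (1::2) then v x else -1)
                           else (if j = 1 then 1 else 0))"
      using assms by (cases "i = 1"; cases "j = 1") auto
  qed
  then show ?thesis unfolding schr_mat_def[abs_def]
    by (intro continuous_on_vec_lambda) auto
qed

lemma schr_periodic:
  assumes "\<And>x. v (x + 1) = v x"
  shows "schr_mat v (x + 1) = schr_mat v x"
  using assms by (simp add: schr_mat_def vec_eq_iff)



lemma periodic_int:
  fixes g :: "real \<Rightarrow> 'b"
  assumes "\<And>x. g (x + 1) = g x"
  shows "g (x + real_of_int k) = g x"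
proof -
  have nat: "g (y + real n) = g y" for y n
  proof (induction n)
    case (Suc n)
    have "g (y + real (Suc n)) = g (y + real n + 1)" by (simp add: algebra_simps)
    then show ?case using assms Suc by simp
  qed simp
  show ?thesis
  proof (cases "k \<ge> 0")
    case True
    then show ?thesis using nat[of x "nat k"] by simp
  next
    case False
    have "g (x + real_of_int k) = g (x + real_of_int k + real (nat (-k)))"
      using nat[of "x + real_of_int k" "nat (-k)"] by simp
    also have "\<dots> = g x" using False by simp
    finally show ?thesis .
  qed
qed

lemma periodic_integral_shift:
  fixes g :: "real \<Rightarrow> real"
  assumes cont: "continuous_on UNIV g" and per: "\<And>x. g (x + 1) = g x"
  shows "integral {0..1} (\<lambda>x. g (x + c)) = integral {0..1} g"
proof -
  define r where "r = frac c"
  have r: "0 \<le> r" "r < 1" using frac_ge_0 frac_lt_1 r_def by auto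
  have "c = r + real_of_int \<lfloor>c\<rfloor>" unfolding r_def frac_def by simp
  then have eq: "g (x + c) = g (x + r)" for x
    using periodic_int[of g, OF per, of "x + r" "\<lfloor>c\<rfloor>"] by (simp add: add.assoc)
  have int: "g integrable_on {a..b}" for a b
    by (rule integrable_continuous_real) (rule continuous_on_subset[OF cont], simp)
  have "integral {0..1} (\<lambda>x. g (x + c)) = integral {0..1} (g \<circ> (+) r)"
    using eq by (simp add: o_def add.commute)
  also have "\<dots> = integral {r..1 + r} g"
    using integral_shift_Icc_real[of 0 1 g r] by simp
  also have "\<dots> = integral {r..1} g + integral {1..1+r} g"
    using Henstock_Kurzweil_Integration.integral_combine[where f=g and a=r and c=1 and b="1+r"] int r by simp
  also have "integral {1..1+r} g = integral {0..r} (g \<circ> (+) 1)"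
    using integral_shift_Icc_real[of 0 r g 1] by (simp add: add.commute)
  also have "\<dots> = integral {0..r} g"
    using per by (simp add: o_def add.commute)
  also have "integral {r..1} g + integral {0..r} g = integral {0..1} g"
    using Henstock_Kurzweil_Integration.integral_combine[where f=g and a=0 and c=r and b=1] int r by simp
  finally show ?thesis .
qed


lemma subadd_mult:
  fixes a :: "nat \<Rightarrow> real"
  assumes sub: "\<And>n m. a (n + m) \<le> a n + a m"
  shows "a (q * k + r) \<le> real q * a k + a r"
proof (induction q)
  case (Suc q)
  have "a (Suc q * k + r) = a (k + (q * k + r))" by (simp add: algebra_simps)
  also have "\<dots> \<le> a k + a (q * k + r)" by (rule sub)
  finally show ?case using Suc by (simp add: algebra_simps)
qed simp

lemma fekete:
  fixes a :: "nat \<Rightarrow> real"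
  assumes sub: "\<And>n m. a (n + m) \<le> a n + a m"
    and bdd: "\<And>n. n \<ge> 1 \<Longrightarrow> B \<le> a n / real n"
  shows "(\<lambda>n. a n / real n) \<longlonglongrightarrow> Inf ((\<lambda>n. a n / real n) ` {1..})"
proof -
  define S where "S = (\<lambda>n. a n / real n) ` {1..}"
  define L where "L = Inf S"
  have bS: "bdd_below S" unfolding S_def using bdd by (auto intro!: bdd_belowI[of _ B])
  have ne: "S \<noteq> {}" unfolding S_def by auto
  have low: "L \<le> a n / real n" if "n \<ge> 1" for n
    unfolding L_def using bS that by (auto intro!: cInf_lower simp: S_def)
  show ?thesis unfolding S_def[symmetric] L_def[symmetric]
  proof (rule LIMSEQ_I)
    fix e :: real assume e: "0 < e"
    have "L < L + e/2" using e by simp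
    then obtain s where "s \<in> S" "s < L + e/2"
      using cInf_lessD[OF ne] unfolding L_def by blast
    then obtain k where k: "k \<ge> 1" "a k / real k < L + e/2" unfolding S_def by auto
    define D where "D = (\<Sum>j<k. \<bar>a j\<bar>)"
    define E where "E = \<bar>a k\<bar> + D"
    have E0: "E \<ge> 0" unfolding E_def D_def by (auto intro: sum_nonneg)
    obtain N :: nat where N: "real N > 2 * E / e" using reals_Archimedean2 by blast
    show "\<exists>no. \<forall>n\<ge>no. norm (a n / real n - L) < e"
    proof (intro exI allI impI)
      fix n assume n: "n \<ge> N + 1"
      have n1: "n \<ge> 1" using n by simp
      define q where "q = n div k"
      define r where "r = n mod k"
      have nqr: "n = q * k + r" unfolding q_def r_def by simp
      have rk: "r < k" unfolding r_def using k by simp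
      have ar: "a r \<le> D" unfolding D_def
      proof -
        have "\<bar>a r\<bar> \<le> (\<Sum>j<k. \<bar>a j\<bar>)" using rk by (intro member_le_sum) auto
        then show "a r \<le> (\<Sum>j<k. \<bar>a j\<bar>)" by linarith
      qed
      have "a n \<le> real q * a k + a r" using subadd_mult[of a, OF sub, of q k r] nqr by simp
      also have "real q * a k = (real n - real r) * (a k / real k)"
      proof -
        have "real n - real r = real q * real k" using nqr by simp
        then show ?thesis using k by simp
      qed
      also have "\<dots> = real n * (a k / real k) - real r * (a k / real k)" by (rule left_diff_distrib)
      also have "- (real r * (a k / real k)) \<le> \<bar>a k\<bar>"
      proof -
        have "\<bar>real r * (a k / real k)\<bar> = (real r / real k) * \<bar>a k\<bar>"
          using k by (simp add: abs_mult)
        also have "\<dots> \<le> 1 * \<bar>a k\<bar>" using rk k by (intro mult_right_mono) auto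
        finally show ?thesis by linarith
      qed
      then have "real n * (a k / real k) - real r * (a k / real k) + a r \<le> real n * (a k / real k) + E"
        using ar unfolding E_def by linarith
      finally have "a n \<le> real n * (a k / real k) + E" by linarith
      then have "a n / real n \<le> a k / real k + E / real n"
        using n1 by (simp add: field_simps)
      moreover have "E / real n < e / 2"
      proof -
        have "2 * E / e < real n" using N n by simp
        then show ?thesis using e n1 by (simp add: field_simps)
      qed
      ultimately have "a n / real n < L + e" using k by linarith
      moreover have "L \<le> a n / real n" using low n1 by simp
      ultimately show "norm (a n / real n - L) < e" by simp
    qed
  qed
qed



lemma lower_bound:
  fixes v :: "real \<Rightarrow> complex" and \<epsilon> l \<alpha> x :: real
  assumes eps: "0 < \<epsilon>" "\<epsilon> \<le> l" and bnd: "\<And>x. \<epsilon> \<le> Im (v x) \<and> Im (v x) \<le> l"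
  shows "mat_norm (cocycle_iter \<alpha> (schr_mat v) n x) > 0 \<and>
    ln (mat_norm (cocycle_iter \<alpha> (schr_mat v) n x)) \<ge>
      real (n div 2) * \<epsilon> / (2*(l+1)) - ln (l+1+1/\<epsilon>)/2 - ln 2"
proof -
  define s where "s k = v (x + real k * \<alpha>)" for k
  define z where "z = rec_nat \<i> (\<lambda>k zk. s k - 1 / zk)"
  have z0: "z 0 = \<i>" and zS: "z (Suc k) = s k - 1 / z k" for k by (simp_all add: z_def)
  define y where "y k = Im (z k)" for k
  have sb: "\<epsilon> \<le> Im (s k)" "Im (s k) \<le> l" for k using bnd unfolding s_def by auto
  have cm: "(cmod c)^2 = (Re c)^2 + (Im c)^2" for c by (simp add: cmod_power2)
  have yS: "y (Suc k) = Im (s k) + y k / (cmod (z k))^2" for k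
    unfolding y_def zS by (simp add: Im_divide cm)
  have ypos: "y k > 0" for k
  proof (induction k)
    case 0 then show ?case by (simp add: y_def z0)
  next
    case (Suc k)
    have "y k / (cmod (z k))^2 \<ge> 0" using Suc by simp
    then show ?case using yS[of k] sb[of k] eps by linarith
  qed
  have znz: "z k \<noteq> 0" for k using ypos[of k] unfolding y_def by auto
  have cpos: "(cmod (z k))^2 > 0" for k using znz[of k] by simp
  have yq: "y k / (cmod (z k))^2 > 0" for k using ypos[of k] cpos[of k] by simp
  have ymin: "y k \<ge> min 1 \<epsilon>" for k
  proof (cases k)
    case 0 then show ?thesis by (simp add: y_def z0)
  next
    case (Suc j) then show ?thesis using yS[of j] sb[of j] yq[of j] by simp
  qed
  have yup1: "y (Suc k) \<le> l + 1 / y k" for k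
  proof -
    have "(y k)^2 \<le> (cmod (z k))^2" unfolding y_def using abs_Im_le_cmod[of "z k"]
      by (metis abs_ge_zero power2_abs power_mono)
    then have "y k / (cmod (z k))^2 \<le> y k / (y k)^2"
      using ypos[of k] cpos[of k] by (intro divide_left_mono) (auto intro!: mult_pos_pos)
    also have "\<dots> = 1 / y k" using ypos[of k] by (simp add: power2_eq_square)
    finally show ?thesis using yS[of k] sb[of k] by linarith
  qed
  have yup: "y k \<le> l + 1 + 1/\<epsilon>" for k
  proof (cases k)
    case 0 then show ?thesis using eps by (simp add: y_def z0)
  next
    case (Suc j)
    have "1 / y j \<le> 1 / min 1 \<epsilon>" using ymin[of j] eps by (intro divide_left_mono) auto
    also have "\<dots> \<le> 1 + 1/\<epsilon>" using eps by (cases "\<epsilon> \<le> 1") auto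
    finally show ?thesis using yup1[of j] Suc by simp
  qed
  define A where "A = schr_mat v"
  define M where "M n = cocycle_iter \<alpha> A n x" for n
  define w0 :: "complex^2" where "w0 = (\<chi> i. if i = 1 then \<i> else 1)"
  define P where "P n = (\<Prod>k<n. z k)" for n
  have vec: "(M n *v w0)$1 = P n * z n \<and> (M n *v w0)$2 = P n" for n
  proof (induction n)
    case 0 then show ?case by (simp add: M_def w0_def P_def z0 matrix_vector_mul_lid)
  next
    case (Suc n)
    have "M (Suc n) *v w0 = A (x + real n * \<alpha>) *v (M n *v w0)"
      by (simp add: M_def matrix_vector_mul_assoc)
    then have e1: "(M (Suc n) *v w0)$1 = s n * (P n * z n) - P n"
      and e2: "(M (Suc n) *v w0)$2 = P n * z n"
      using Suc by (simp_all add: A_def schr_mat_def matrix_vector_mult_def sum_2 s_def)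
    have "P (Suc n) * z (Suc n) = s n * (P n * z n) - P n"
      unfolding P_def zS using znz[of n] by (simp add: field_simps)
    then show ?case using e1 e2 by (simp add: P_def)
  qed
  have nw0: "norm w0 \<le> 2"
    using norm_vec2_le[of w0] by (simp add: w0_def)
  have Pn: "cmod (P n) = (\<Prod>k<n. cmod (z k))" unfolding P_def by (simp add: prod_norm)
  have Ppos: "cmod (P n) > 0" unfolding P_def using znz by (simp add: prod_zero_iff)
  have "cmod (P n) \<le> norm (M n *v w0)"
  proof -
    have "norm ((M n *v w0)$2) \<le> norm (M n *v w0)" by (rule Finite_Cartesian_Product.norm_nth_le)
    then show ?thesis using vec[of n] by simp
  qed
  also have "\<dots> \<le> mat_norm (M n) * norm w0" by (rule mat_norm_app)
  also have "\<dots> \<le> mat_norm (M n) * 2"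
    using nw0 by (intro mult_left_mono) (auto simp: mat_norm_def intro: onorm_pos_le bl_mv)
  finally have PM: "cmod (P n) / 2 \<le> mat_norm (M n)" by simp
  have Mpos: "mat_norm (M n) > 0" using PM Ppos by linarith
  have lnM: "ln (mat_norm (M n)) \<ge> (\<Sum>k<n. ln (cmod (z k))) - ln 2"
  proof -
    have "ln (cmod (P n) / 2) \<le> ln (mat_norm (M n))"
      using PM Ppos Mpos by (subst ln_le_cancel_iff) auto
    moreover have "ln (cmod (P n) / 2) = (\<Sum>k<n. ln (cmod (z k))) - ln 2"
      using Ppos znz by (simp add: ln_div Pn ln_prod)
    ultimately show ?thesis by simp
  qed
  define T where "T k = ln (y (Suc k)) - ln (y (Suc k) - Im (s k))" for k
  have dpos: "y (Suc k) - Im (s k) = y k / (cmod (z k))^2" for k using yS[of k] by simp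
  have lnz: "2 * ln (cmod (z k)) = ln (y k) - ln (y (Suc k)) + T k" for k
  proof -
    have "2 * ln (cmod (z k)) = ln ((cmod (z k))^2)" using znz[of k] by (simp add: ln_realpow)
    also have "\<dots> = ln (y k) - ln (y (Suc k) - Im (s k))"
      using dpos[of k] ypos[of k] cpos[of k] by (simp add: ln_div)
    finally show ?thesis unfolding T_def by simp
  qed
  have Tge: "T k \<ge> \<epsilon> / y (Suc k)" for k
  proof -
    define Y where "Y = y (Suc k)"
    define d where "d = y (Suc k) - Im (s k)"
    have yk: "Y > 0" unfolding Y_def by (rule ypos)
    have d0: "d > 0" unfolding d_def using dpos[of k] yq[of k] by simp
    have Td: "T k = ln Y - ln d" unfolding T_def Y_def d_def by simp
    have q: "d / Y > 0" using d0 yk by simp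
    have "ln (d / Y) \<le> d / Y - 1"
      using q by (rule ln_le_minus_one)
    also have "\<dots> = - (Im (s k) / Y)" using yk unfolding d_def Y_def by (simp add: field_simps)
    finally have "T k \<ge> Im (s k) / Y"
      unfolding Td using d0 yk by (simp add: ln_div)
    moreover have "\<epsilon> / Y \<le> Im (s k) / Y"
      using sb[of k] yk by (simp add: divide_right_mono)
    ultimately show ?thesis unfolding Y_def by linarith
  qed
  have T0: "T k \<ge> 0" for k using Tge[of k] ypos[of "Suc k"] eps
    by (smt (verit) divide_pos_pos)
  have l1: "\<epsilon> / y j \<ge> \<epsilon> / (l+1)" if "y j \<le> l + 1" for j
    using that ypos[of j] eps by (intro divide_left_mono) auto
  have pair: "T (2*j) + T (2*j+1) \<ge> \<epsilon>/(l+1)" for j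
  proof (cases "y (2*j+1) \<le> l+1")
    case True
    then show ?thesis using Tge[of "2*j"] T0[of "2*j+1"] l1[of "2*j+1"] by simp
  next
    case False
    then have "y (2*j+1) > 1" using eps by linarith
    then have "1 / y (2*j+1) < 1" by simp
    then have "y (Suc (2*j+1)) \<le> l + 1" using yup1[of "2*j+1"] by linarith
    then show ?thesis using Tge[of "2*j+1"] T0[of "2*j"] l1[of "Suc (2*j+1)"] by simp
  qed
  have sumT2: "(\<Sum>k<2*m. T k) \<ge> real m * \<epsilon>/(l+1)" for m
  proof (induction m)
    case (Suc m)
    have "(\<Sum>k<2*Suc m. T k) = (\<Sum>k<2*m. T k) + T (2*m) + T (2*m+1)"
      by (simp add: mult_2)
    then show ?case using Suc pair[of m] by (simp add: algebra_simps add_divide_distrib)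
  qed simp
  have sumT: "(\<Sum>k<n. T k) \<ge> real (n div 2) * \<epsilon>/(l+1)"
  proof -
    have "(\<Sum>k<2*(n div 2). T k) \<le> (\<Sum>k<n. T k)"
      using T0 by (intro sum_mono2) auto
    then show ?thesis using sumT2[of "n div 2"] by linarith
  qed
  have tele: "(\<Sum>k<n. ln (y k) - ln (y (Suc k))) = ln (y 0) - ln (y n)"
    by (rule sum_lessThan_telescope')
  have y0: "y 0 = 1" by (simp add: y_def z0)
  have lnyn: "ln (y n) \<le> ln (l+1+1/\<epsilon>)" using ypos[of n] yup[of n] by simp
  have "2 * (\<Sum>k<n. ln (cmod (z k))) = (\<Sum>k<n. ln (y k) - ln (y (Suc k))) + (\<Sum>k<n. T k)"
    by (simp add: sum_distrib_left lnz sum.distrib)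
  then have "2 * (\<Sum>k<n. ln (cmod (z k))) \<ge> real (n div 2) * \<epsilon>/(l+1) - ln (l+1+1/\<epsilon>)"
    using tele y0 lnyn sumT by simp
  moreover have "real (n div 2) * \<epsilon>/(2*(l+1)) = (real (n div 2) * \<epsilon>/(l+1)) / 2" by simp
  moreover have h: "\<And>a b S::real. a - b \<le> 2*S \<Longrightarrow> a/2 - b/2 \<le> S" by simp
  ultimately have "(\<Sum>k<n. ln (cmod (z k))) \<ge> real (n div 2) * \<epsilon>/(2*(l+1)) - ln (l+1+1/\<epsilon>)/2"
    by metis
  then show ?thesis using lnM Mpos unfolding M_def A_def by linarith
qed


theorem lemma5p6:
  shows "\<forall>l::real. l > 0 \<longrightarrow> (\<exists>C>0. \<forall>(\<epsilon>::real) (\<alpha>::real) (v::real \<Rightarrow> complex).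
     0 < \<epsilon> \<and> \<epsilon> \<le> l \<and> \<alpha> \<notin> \<rat> \<and> continuous_on UNIV v \<and> (\<forall>x. v (x + 1) = v x) \<and>
     (\<forall>x. \<bar>Re (v x)\<bar> \<le> l \<and> \<epsilon> \<le> Im (v x) \<and> Im (v x) \<le> l)
     \<longrightarrow> lyap_exp \<alpha> (schr_mat v) \<ge> C * \<epsilon>)"
proof (intro allI impI)
  fix l :: real assume l: "l > 0"
  show "\<exists>C>0. \<forall>(\<epsilon>::real) (\<alpha>::real) (v::real \<Rightarrow> complex).
     0 < \<epsilon> \<and> \<epsilon> \<le> l \<and> \<alpha> \<notin> \<rat> \<and> continuous_on UNIV v \<and> (\<forall>x. v (x + 1) = v x) \<and>
     (\<forall>x. \<bar>Re (v x)\<bar> \<le> l \<and> \<epsilon> \<le> Im (v x) \<and> Im (v x) \<le> l)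
     \<longrightarrow> lyap_exp \<alpha> (schr_mat v) \<ge> C * \<epsilon>"
  proof (intro exI[of _ "1/(4*(l+1))"] conjI allI impI)
    show "1/(4*(l+1)) > 0" using l by simp
    fix \<epsilon> \<alpha> :: real and v :: "real \<Rightarrow> complex"
    assume H: "0 < \<epsilon> \<and> \<epsilon> \<le> l \<and> \<alpha> \<notin> \<rat> \<and> continuous_on UNIV v \<and> (\<forall>x. v (x + 1) = v x) \<and>
     (\<forall>x. \<bar>Re (v x)\<bar> \<le> l \<and> \<epsilon> \<le> Im (v x) \<and> Im (v x) \<le> l)"
    then have eps: "0 < \<epsilon>" "\<epsilon> \<le> l" and vc: "continuous_on UNIV v"
      and vp: "\<And>x. v (x+1) = v x" and bnd: "\<And>x. \<epsilon> \<le> Im (v x) \<and> Im (v x) \<le> l" by auto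
    define A where "A = schr_mat v"
    define f where "f n x = ln (mat_norm (cocycle_iter \<alpha> A n x))" for n x
    define a where "a n = integral {0..1} (f n)" for n
    define K where "K = ln (l+1+1/\<epsilon>)/2 + ln 2"
    have LB: "mat_norm (cocycle_iter \<alpha> A n x) > 0 \<and> f n x \<ge> real (n div 2) * \<epsilon>/(2*(l+1)) - K" for n x
      using lower_bound[where v=v and \<epsilon>=\<epsilon> and l=l and \<alpha>=\<alpha> and n=n and x=x, OF eps bnd] unfolding f_def A_def K_def by auto
    have Ac: "continuous_on UNIV A" unfolding A_def by (rule schr_cont[OF vc])
    have Ap: "\<And>x. A (x+1) = A x" unfolding A_def using schr_periodic[of v] vp by blast
    have fc: "continuous_on UNIV (f n)" for n
    proof -
      have "continuous_on UNIV (\<lambda>x. mat_norm (cocycle_iter \<alpha> A n x))"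
        by (rule continuous_on_compose2[OF mat_norm_cont cocycle_cont[OF Ac]]) auto
      then have "continuous_on UNIV (\<lambda>x. ln (mat_norm (cocycle_iter \<alpha> A n x)))"
        using LB by (intro continuous_on_ln) (auto, metis less_irrefl)
      moreover have "f n = (\<lambda>x. ln (mat_norm (cocycle_iter \<alpha> A n x)))" by (rule ext) (simp add: f_def)
      ultimately show ?thesis by simp
    qed
    have fp: "f n (x+1) = f n x" for n x using cocycle_periodic[of A, OF Ap] by (simp add: f_def)
    have fi: "g integrable_on {0..1}" if "continuous_on UNIV g" for g :: "real \<Rightarrow> real"
      by (rule integrable_continuous_real) (rule continuous_on_subset[OF that], simp)
    have sub: "a (n+m) \<le> a n + a m" for n m
    proof -
      have pt: "f (n+m) x \<le> f m (x + real n * \<alpha>) + f n x" for x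
      proof -
        have p1: "mat_norm (cocycle_iter \<alpha> A m (x + real n * \<alpha>)) > 0" using LB by blast
        have p2: "mat_norm (cocycle_iter \<alpha> A n x) > 0" using LB by blast
        have p3: "mat_norm (cocycle_iter \<alpha> A (n+m) x) > 0" using LB by blast
        have "mat_norm (cocycle_iter \<alpha> A (n+m) x) \<le>
              mat_norm (cocycle_iter \<alpha> A m (x + real n * \<alpha>)) * mat_norm (cocycle_iter \<alpha> A n x)"
          unfolding cocycle_add by (rule mat_norm_mult)
        then have "ln (mat_norm (cocycle_iter \<alpha> A (n+m) x)) \<le>
              ln (mat_norm (cocycle_iter \<alpha> A m (x + real n * \<alpha>)) * mat_norm (cocycle_iter \<alpha> A n x))"
          using p1 p2 p3 by (subst ln_le_cancel_iff) auto
        then show ?thesis unfolding f_def using p1 p2 by (simp add: ln_mult)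
      qed
      have sc: "continuous_on UNIV (\<lambda>x. f m (x + real n * \<alpha>))"
        by (rule continuous_on_compose2[OF fc]) (auto intro: continuous_intros)
      have shift: "integral {0..1} (\<lambda>x. f m (x + real n * \<alpha>)) = a m"
        unfolding a_def by (rule periodic_integral_shift[of "f m", OF fc fp])
      have "a (n+m) \<le> integral {0..1} (\<lambda>x. f m (x + real n * \<alpha>) + f n x)"
        unfolding a_def using pt fi[OF fc] fi[OF sc]
        by (intro integral_le integrable_add) auto
      also have "\<dots> = integral {0..1} (\<lambda>x. f m (x + real n * \<alpha>)) + a n"
        unfolding a_def by (rule Henstock_Kurzweil_Integration.integral_add[OF fi[OF sc] fi[OF fc]])
      finally show ?thesis using shift by simp
    qed
    have ab: "a n \<ge> real (n div 2) * \<epsilon>/(2*(l+1)) - K" for n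
    proof -
      have "integral {0..1} (\<lambda>x::real. real (n div 2) * \<epsilon>/(2*(l+1)) - K) \<le> a n"
        unfolding a_def
      proof (rule Henstock_Kurzweil_Integration.integral_le)
        show "(\<lambda>x::real. real (n div 2) * \<epsilon>/(2*(l+1)) - K) integrable_on {0..1}"
          by (rule fi) (rule continuous_on_const)
        show "f n integrable_on {0..1}" by (rule fi[OF fc])
        show "\<And>x. x \<in> {0..1} \<Longrightarrow> real (n div 2) * \<epsilon>/(2*(l+1)) - K \<le> f n x"
          using LB by blast
      qed
      then show ?thesis by simp
    qed
    define c where "c = \<epsilon>/(4*(l+1))"
    have c0: "c \<ge> 0" unfolding c_def using eps l by simp
    have K0: "K \<ge> 0"
    proof -
      have "l + 1 + 1/\<epsilon> \<ge> 1" using eps l by simp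
      then have "ln (l+1+1/\<epsilon>) \<ge> 0" by simp
      then show ?thesis unfolding K_def by simp
    qed
    have ab2: "a n / real n \<ge> c - (c + K)/real n" if n1: "n \<ge> 1" for n
    proof -
      have "n \<le> 2 * (n div 2) + 1" by linarith
      then have "real n \<le> 2 * real (n div 2) + 1" by linarith
      moreover have h: "\<And>N D::real. N \<le> 2 * D + 1 \<Longrightarrow> D \<ge> (N - 1)/2" by simp
      ultimately have "real (n div 2) \<ge> (real n - 1)/2" by blast
      then have "real (n div 2) * \<epsilon>/(2*(l+1)) \<ge> ((real n - 1)/2) * \<epsilon>/(2*(l+1))"
        using eps l by (intro divide_right_mono mult_right_mono) auto
      also have "((real n - 1)/2) * \<epsilon>/(2*(l+1)) = real n * c - c"
      proof -
        have h2: "\<And>N e L::real. L > 0 \<Longrightarrow> ((N-1)/2)*e/(2*L) = N*(e/(4*L)) - e/(4*L)"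
          by (simp add: field_simps)
        show ?thesis unfolding c_def using h2[of "l+1" "real n" \<epsilon>] l by simp
      qed
      finally have "a n \<ge> real n * c - c - K" using ab[of n] by linarith
      then have "a n / real n \<ge> (real n * c - c - K) / real n" using n1 by (intro divide_right_mono) auto
      also have "(real n * c - c - K) / real n = c - (c + K)/real n" using n1 by (simp add: field_simps)
      finally show ?thesis .
    qed
    have bddB: "- (c+K) \<le> a n / real n" if "n \<ge> 1" for n
    proof -
      have "(c + K)/real n \<le> c + K"
      proof -
        have "(c + K) * 1 \<le> (c + K) * real n" using that c0 K0 by (intro mult_left_mono) auto
        then show ?thesis using that by (simp add: divide_le_eq)
      qed
      then show ?thesis using ab2[OF that] c0 by linarith
    qed
    define L where "L = Inf ((\<lambda>n. a n / real n) ` {1..})"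
    have conv: "(\<lambda>n. a n / real n) \<longlonglongrightarrow> L" unfolding L_def
      by (rule fekete[OF sub bddB])
    have lim2: "(\<lambda>n. c - (c+K)/real n) \<longlonglongrightarrow> c - 0"
      by (intro tendsto_diff tendsto_const lim_const_over_n)
    have cL: "c \<le> L"
      by (rule LIMSEQ_le[OF lim2[simplified] conv]) (use ab2 in auto)
    have seq: "(\<lambda>n. (1 / real n) * integral {0..1} (\<lambda>x. ln (mat_norm (cocycle_iter \<alpha> (schr_mat v) n x))))
               = (\<lambda>n. a n / real n)"
      by (rule ext) (simp add: a_def f_def[abs_def] A_def)
    have "lyap_exp \<alpha> (schr_mat v) = L"
      unfolding lyap_exp_def seq using conv by (rule limI)
    then show "lyap_exp \<alpha> (schr_mat v) \<ge> 1/(4*(l+1)) * \<epsilon>" using cL unfolding c_def by simp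
  qed
qed

end
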